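(* For any $0<\lambda<n$ and $1\le p<\infty$, $$V^{(\ast)}_{0,\infty}L^{p,\lambda}\subsetneqq V_0L^{p,\lambda}\cap V_\infty L^{p,\lambda}\subsetneqq V_0L^{p,\lambda}\subsetneqq L^{p,\lambda}(\mathbb{R}^n).$$
   Context: $B(x,r)$ is the open ball in $\mathbb{R}^n$ with center $x$ and radius $r$. For $f\in L^1_{\mathrm{loc}}(\mathbb{R}^n)$ let $\mathfrak{M}_{p,\lambda}(f;x,r):=r^{-\lambda}\int_{B(x,r)}|f(y)|^p\,dy$. The homogeneous Morrey space $L^{p,\lambda}(\mathbb{R}^n)$ consists of $f\in L^p_{\mathrm{loc}}(\mathbb{R}^n)$ with $\|f\|_{p,\lambda}:=\sup_{x\in\mathbb{R}^n,\,r>0}\mathfrak{M}_{p,\lambda}(f;x,r)^{1/p}<\infty$. Subsets of $L^{p,\lambda}$: $V_0L^{p,\lambda}=\{f:\lim_{r\to0}\sup_{x}\mathfrak{M}_{p,\lambda}(f;x,r)=0\}$; $V_\infty L^{p,\lambda}=\{f:\lim_{r\to\infty}\sup_{x}\mathfrak{M}_{p,\lambda}(f;x,r)=0\}$; $V^{(\ast)}L^{p,\lambda}=\{f:\lim_{N\to\infty}\sup_{x}\int_{B(x,1)}|f(y)|^p\chi_{\mathbb{R}^n\setminus B(0,N)}(y)\,dy=0\}$; $V^{(\ast)}_{0,\infty}L^{p,\lambda}:=V_0L^{p,\lambda}\cap V_\infty L^{p,\lambda}\cap V^{(\ast)}L^{p,\lambda}$. *)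

theory Defs
  imports "HOL-Analysis.Analysis"
begin

definition morrey_M :: "real \<Rightarrow> real \<Rightarrow> ('a::euclidean_space \<Rightarrow> real) \<Rightarrow> 'a \<Rightarrow> real \<Rightarrow> ennreal" where
  "morrey_M p lam f x r =
     ennreal (r powr (-lam)) * (\<integral>\<^sup>+ y. ennreal (\<bar>f y\<bar> powr p) * indicator (ball x r) y \<partial>lebesgue)"

definition Lp_loc :: "real \<Rightarrow> ('a::euclidean_space \<Rightarrow> real) set" where
  "Lp_loc p = {f. f \<in> borel_measurable lebesgue \<and>
     (\<forall>x r. (\<integral>\<^sup>+ y. ennreal (\<bar>f y\<bar> powr p) * indicator (ball x r) y \<partial>lebesgue) < \<infinity>)}"

definition morrey :: "real \<Rightarrow> real \<Rightarrow> ('a::euclidean_space \<Rightarrow> real) set" where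
  "morrey p lam = {f. f \<in> Lp_loc p \<and> (SUP x. SUP r\<in>{0<..}. morrey_M p lam f x r) < \<infinity>}"

definition V0_morrey :: "real \<Rightarrow> real \<Rightarrow> ('a::euclidean_space \<Rightarrow> real) set" where
  "V0_morrey p lam = {f \<in> morrey p lam.
     ((\<lambda>r. SUP x. morrey_M p lam f x r) \<longlongrightarrow> 0) (at_right 0)}"

definition Vinf_morrey :: "real \<Rightarrow> real \<Rightarrow> ('a::euclidean_space \<Rightarrow> real) set" where
  "Vinf_morrey p lam = {f \<in> morrey p lam.
     ((\<lambda>r. SUP x. morrey_M p lam f x r) \<longlongrightarrow> 0) at_top}"

definition Vstar_morrey :: "real \<Rightarrow> real \<Rightarrow> ('a::euclidean_space \<Rightarrow> real) set" where
  "Vstar_morrey p lam = {f \<in> morrey p lam.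
     ((\<lambda>N::real. SUP x. (\<integral>\<^sup>+ y. ennreal (\<bar>f y\<bar> powr p) * indicator (ball x 1) y
                              * indicator (UNIV - ball 0 N) y \<partial>lebesgue)) \<longlongrightarrow> 0) at_top}"

definition V0inf_star_morrey :: "real \<Rightarrow> real \<Rightarrow> ('a::euclidean_space \<Rightarrow> real) set" where
  "V0inf_star_morrey p lam = V0_morrey p lam \<inter> Vinf_morrey p lam \<inter> Vstar_morrey p lam"

end

theory Submission
  imports Defs "HOL-Real_Asymp.Real_Asymp"
begin

lemma ball_meas:
  assumes "r \<ge> 0"
  shows "emeasure lebesgue (ball (c::'a::euclidean_space) r) = ennreal (r ^ DIM('a) * Henstock_Kurzweil_Integration.content (ball (0::'a) 1))"
proof -
  have "emeasure lebesgue (ball (0::'a) 1) = ennreal (Henstock_Kurzweil_Integration.content (ball (0::'a) 1))"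
    using emeasure_lborel_ball_finite[of "0::'a" 1] by (subst emeasure_eq_ennreal_measure) auto
  then show ?thesis using emeasure_lebesgue_ball_conv_unit_ball[OF assms, of c] assms
    by (simp add: ennreal_mult')
qed

lemma int_const_ball:
  assumes "r \<ge> 0" "k \<ge> 0"
  shows "(\<integral>\<^sup>+ y. ennreal k * indicator (ball (c::'a::euclidean_space) r) y \<partial>lebesgue)
     = ennreal (k * (r ^ DIM('a) * Henstock_Kurzweil_Integration.content (ball (0::'a) 1)))"
  using assms ball_meas[OF assms(1), of c] by (simp add: nn_integral_cmult_indicator ennreal_mult')

lemma int_bdd_ball:
  assumes "r \<ge> 0" "\<And>y. h y \<le> 1"
  shows "(\<integral>\<^sup>+ y. ennreal (h y) * indicator (ball (c::'a::euclidean_space) r) y \<partial>lebesgue)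
     \<le> ennreal (r ^ DIM('a) * Henstock_Kurzweil_Integration.content (ball (0::'a) 1))"
proof -
  have "(\<integral>\<^sup>+ y. ennreal (h y) * indicator (ball c r) y \<partial>lebesgue)
     \<le> (\<integral>\<^sup>+ y. ennreal 1 * indicator (ball c r) y \<partial>lebesgue)"
    by (intro nn_integral_mono) (auto simp: assms(2) indicator_def)
  also have "\<dots> = ennreal (r ^ DIM('a) * Henstock_Kurzweil_Integration.content (ball (0::'a) 1))"
    using int_const_ball[OF assms(1), of 1 c] by simp
  finally show ?thesis .
qed

lemma dyadic_k:
  fixes r t :: real
  assumes "0 < t" "t < r"
  shows "\<exists>k::nat. r / 2^(k+1) \<le> t \<and> t < r / 2^k"
proof -
  obtain m::nat where m: "r / t < 2^m" using real_arch_pow[of 2 "r/t"] by auto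
  hence ex: "\<exists>k. r / 2^(k+1) \<le> t"
    using assms by (intro exI[of _ m]) (auto simp: field_simps)
  define k where "k = (LEAST k. r / 2^(k+1) \<le> t)"
  have k1: "r / 2^(k+1) \<le> t" unfolding k_def by (rule LeastI_ex[OF ex])
  have k2: "t < r / 2^k"
  proof (cases k)
    case 0 thus ?thesis using assms by simp
  next
    case (Suc j)
    hence "\<not> r / 2^(j+1) \<le> t" using not_less_Least[of j "\<lambda>k. r / 2^(k+1) \<le> t"] k_def by auto
    thus ?thesis using Suc by simp
  qed
  show ?thesis using k1 k2 by blast
qed

lemma le_suminf_enn: "(f::nat\<Rightarrow>ennreal) k \<le> suminf f"
  using sum_le_suminf[of f "{k}"] by auto

lemma pointwise_dyadic:
  fixes y :: "'a::euclidean_space"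
  assumes "0 < a" "0 < r"
  shows "ennreal (norm y powr (-a)) * indicator (ball 0 r) y
     \<le> (\<Sum>k. ennreal ((r / 2^(k+1)) powr (-a)) * indicator (ball (0::'a) (r / 2^k)) y)"
proof (cases "y \<in> ball 0 r \<and> y \<noteq> 0")
  case False thus ?thesis by (auto simp: indicator_def)
next
  case True
  hence t: "0 < norm y" "norm y < r" by auto
  obtain k where k: "r / 2^(k+1) \<le> norm y" "norm y < r / 2^k" using dyadic_k[OF t] by blast
  have "ennreal (norm y powr (-a)) * indicator (ball 0 r) y = ennreal (norm y powr (-a))"
    using True by simp
  also have "\<dots> \<le> ennreal ((r / 2^(k+1)) powr (-a))"
    using k assms by (intro ennreal_leI powr_mono2') auto
  also have "\<dots> = ennreal ((r / 2^(k+1)) powr (-a)) * indicator (ball (0::'a) (r / 2^k)) y"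
    using k by simp
  also have "\<dots> \<le> (\<Sum>k. ennreal ((r / 2^(k+1)) powr (-a)) * indicator (ball (0::'a) (r / 2^k)) y)"
    by (rule le_suminf_enn)
  finally show ?thesis .
qed

lemma term_eq:
  fixes r a n :: real and k :: nat
  assumes "0 < r"
  shows "(r / 2^(k+1)) powr (-a) * (r / 2^k) powr n = r powr (n - a) * 2 powr a * (2 powr (a - n)) ^ k"
proof -
  have e1: "(2::real)^(k+1) = 2 powr (real k+1)" "(2::real)^k = 2 powr (real k)"
    by (simp_all add: powr_realpow[symmetric] add.commute del: power_Suc)
  have h1: "(r / 2^(k+1)) powr (-a) = r powr (-a) * 2 powr ((k+1) * a)"
    unfolding e1 using assms by (simp add: powr_divide powr_powr powr_minus divide_simps add.commute)
  have h2: "(r / 2^k) powr n = r powr n * 2 powr (- (k * n))"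
    unfolding e1 using assms by (simp add: powr_divide powr_powr powr_minus divide_simps)
  have h3: "(2 powr (a - n)) ^ k = (2::real) powr (k * (a - n))"
    by (simp add: powr_realpow[symmetric] powr_powr mult.commute)
  have C: "r powr n * r powr (-a) = r powr (n - a)"
    using assms by (simp add: powr_add[symmetric])
  have D: "2 powr ((k+1) * a) * 2 powr (- (k * n)) = (2::real) powr a * 2 powr (k * (a - n))"
    by (simp add: powr_add[symmetric] algebra_simps)
  have "(r / 2^(k+1)) powr (-a) * (r / 2^k) powr n = (r powr (-a) * 2 powr ((k+1) * a)) * (r powr n * 2 powr (- (k * n)))"
    by (simp only: h1 h2)
  also have "\<dots> = (r powr n * r powr (-a)) * (2 powr ((k+1) * a) * 2 powr (- (k * n)))"
    by (simp only: ac_simps)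
  also have "\<dots> = r powr (n - a) * (2 powr a * 2 powr (k * (a - n)))"
    by (simp only: C D)
  also have "\<dots> = r powr (n - a) * 2 powr a * (2 powr (a - n)) ^ k"
    by (simp only: h3 mult.assoc)
  finally show ?thesis .
qed

definition vB :: "'a::euclidean_space itself \<Rightarrow> real" where
  "vB _ = Henstock_Kurzweil_Integration.content (ball (0::'a) 1)"

lemma vB_pos: "vB TYPE('a::euclidean_space) > 0"
  unfolding vB_def by (rule content_ball_pos) simp

lemma I0:
  fixes a r :: real
  assumes a: "0 < a" "a < real DIM('a::euclidean_space)" and r: "0 < r"
  shows "(\<integral>\<^sup>+ y. ennreal (norm y powr (-a)) * indicator (ball (0::'a) r) y \<partial>lebesgue)
    \<le> ennreal (vB TYPE('a) * 2 powr a / (1 - 2 powr (a - DIM('a))) * r powr (DIM('a) - a))"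
proof -
  let ?n = "real DIM('a)"
  let ?v = "vB TYPE('a)"
  let ?q = "(2::real) powr (a - ?n)"
  have q: "0 < ?q" "?q < 1" using a powr_less_cancel_iff[of 2 "a - ?n" 0] by auto
  have "(\<integral>\<^sup>+ y. ennreal (norm y powr (-a)) * indicator (ball (0::'a) r) y \<partial>lebesgue)
     \<le> (\<integral>\<^sup>+ y. (\<Sum>k. ennreal ((r / 2^(k+1)) powr (-a)) * indicator (ball (0::'a) (r / 2^k)) y) \<partial>lebesgue)"
    by (intro nn_integral_mono pointwise_dyadic a r)
  also have "\<dots> = (\<Sum>k. \<integral>\<^sup>+ y. ennreal ((r / 2^(k+1)) powr (-a)) * indicator (ball (0::'a) (r / 2^k)) y \<partial>lebesgue)"
    by (intro nn_integral_suminf borel_measurable_times_ennreal borel_measurable_const borel_measurable_indicator) auto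
  also have "\<dots> = (\<Sum>k. ennreal (?v * (r powr (?n - a) * 2 powr a) * ?q ^ k))"
  proof (intro suminf_cong)
    fix k :: nat
    have "(\<integral>\<^sup>+ y. ennreal ((r / 2^(k+1)) powr (-a)) * indicator (ball (0::'a) (r / 2^k)) y \<partial>lebesgue)
       = ennreal ((r / 2^(k+1)) powr (-a) * ((r / 2^k) ^ DIM('a) * ?v))"
      using r by (subst int_const_ball) (auto simp: vB_def)
    also have "(r / 2^k) ^ DIM('a) = (r / 2^k) powr ?n"
      using r by (simp add: powr_realpow)
    also have "(r / 2^(k+1)) powr (-a) * ((r / 2^k) powr ?n * ?v) = ?v * (r powr (?n - a) * 2 powr a) * ?q ^ k"
      using term_eq[OF r, of k a ?n] by (simp only: ac_simps)
    finally show "(\<integral>\<^sup>+ y. ennreal ((r / 2^(k+1)) powr (-a)) * indicator (ball (0::'a) (r / 2^k)) y \<partial>lebesgue)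
       = ennreal (?v * (r powr (?n - a) * 2 powr a) * ?q ^ k)" .
  qed
  also have "\<dots> = ennreal (\<Sum>k. ?v * (r powr (?n - a) * 2 powr a) * ?q ^ k)"
    using q vB_pos[where 'a='a]
    by (intro suminf_ennreal2 summable_mult summable_geometric mult_nonneg_nonneg zero_le_power) auto
  also have "(\<Sum>k. ?v * (r powr (?n - a) * 2 powr a) * ?q ^ k) = ?v * (r powr (?n - a) * 2 powr a) * (1 / (1 - ?q))"
    using q by (subst suminf_mult) (auto intro: summable_geometric simp: suminf_geometric)
  also have "\<dots> = ?v * 2 powr a / (1 - ?q) * r powr (?n - a)"
    by simp
  finally show ?thesis .
qed

lemma ball_borel[measurable]: "ball (x::'a::euclidean_space) r \<in> sets borel" by simp

lemma int_const_ball':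
  assumes "r \<ge> 0" "k \<ge> 0"
  shows "(\<integral>\<^sup>+ y. ennreal k * indicator (ball (c::'a::euclidean_space) r) y \<partial>lebesgue)
     = ennreal (k * (r ^ DIM('a) * vB TYPE('a)))"
  using int_const_ball[OF assms, of c] by (simp add: vB_def)

lemma intA:
  fixes a r :: real
  assumes a: "0 < a" "a < real DIM('a::euclidean_space)" and r: "0 < r"
  shows "(\<integral>\<^sup>+ y. ennreal (norm y powr (-a)) * indicator (ball (x::'a) r) y \<partial>lebesgue)
    \<le> ennreal ((vB TYPE('a) * 2 powr a / (1 - 2 powr (a - DIM('a))) + vB TYPE('a)) * r powr (DIM('a) - a))"
proof -
  let ?C = "vB TYPE('a) * 2 powr a / (1 - 2 powr (a - DIM('a)))"
  let ?v = "vB TYPE('a)"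
  have q: "2 powr (a - DIM('a)) < 1" using a powr_less_cancel_iff[of 2 "a - DIM('a)" 0] by auto
  have C0: "0 \<le> ?C" using q vB_pos[where 'a='a] by (intro divide_nonneg_pos) auto
  have "(\<integral>\<^sup>+ y. ennreal (norm y powr (-a)) * indicator (ball x r) y \<partial>lebesgue)
     \<le> (\<integral>\<^sup>+ y. ennreal (norm y powr (-a)) * indicator (ball 0 r) y + ennreal (r powr (-a)) * indicator (ball x r) y \<partial>lebesgue)"
  proof (intro nn_integral_mono)
    fix y :: 'a
    show "ennreal (norm y powr (-a)) * indicator (ball x r) y
       \<le> ennreal (norm y powr (-a)) * indicator (ball 0 r) y + ennreal (r powr (-a)) * indicator (ball x r) y"
    proof (cases "y \<in> ball x r")
      case False thus ?thesis by simp
    next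
      case yin: True
      show ?thesis
      proof (cases "norm y < r")
        case True thus ?thesis using yin by simp
      next
        case False
        hence "norm y powr (-a) \<le> r powr (-a)" using r a by (intro powr_mono2') auto
        thus ?thesis using yin False by (simp add: ennreal_leI add_increasing)
      qed
    qed
  qed
  also have "\<dots> = (\<integral>\<^sup>+ y. ennreal (norm y powr (-a)) * indicator (ball (0::'a) r) y \<partial>lebesgue)
       + (\<integral>\<^sup>+ y. ennreal (r powr (-a)) * indicator (ball x r) y \<partial>lebesgue)"
    apply (rule nn_integral_add)
     apply (rule measurable_completion)
     apply measurable
    apply (rule measurable_completion)
    apply measurable
    done
  also have "\<dots> \<le> ennreal (?C * r powr (DIM('a) - a)) + ennreal (r powr (-a) * (r ^ DIM('a) * ?v))"
    using I0[OF a r] int_const_ball'[of r "r powr (-a)" x] r by (intro add_mono) auto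
  also have "r powr (-a) * (r ^ DIM('a) * ?v) = ?v * r powr (DIM('a) - a)"
    using r by (simp add: powr_realpow[symmetric] powr_diff powr_minus divide_simps)
  also have "ennreal (?C * r powr (DIM('a) - a)) + ennreal (?v * r powr (DIM('a) - a))
      = ennreal ((?C + ?v) * r powr (DIM('a) - a))"
  proof -
    have "ennreal (?C * r powr (DIM('a) - a)) + ennreal (?v * r powr (DIM('a) - a))
      = ennreal (?C * r powr (DIM('a) - a) + ?v * r powr (DIM('a) - a))"
      using C0 vB_pos[where 'a='a] by (intro ennreal_plus[symmetric] mult_nonneg_nonneg) auto
    thus ?thesis by (simp add: distrib_right)
  qed
  finally show ?thesis .
qed

lemma M_upper:
  assumes "(\<integral>\<^sup>+ y. ennreal (\<bar>f y\<bar> powr p) * indicator (ball x r) y \<partial>lebesgue) \<le> ennreal B"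
  shows "morrey_M p lam f x r \<le> ennreal (r powr (-lam) * B)"
proof -
  have "morrey_M p lam f x r \<le> ennreal (r powr (-lam)) * ennreal B"
    unfolding morrey_M_def by (intro mult_left_mono assms) auto
  thus ?thesis by (simp add: ennreal_mult'[symmetric])
qed

lemma M_lower:
  assumes "ennreal B \<le> (\<integral>\<^sup>+ y. ennreal (\<bar>f y\<bar> powr p) * indicator (ball x r) y \<partial>lebesgue)"
  shows "ennreal (r powr (-lam) * B) \<le> morrey_M p lam f x r"
proof -
  have "ennreal (r powr (-lam)) * ennreal B \<le> morrey_M p lam f x r"
    unfolding morrey_M_def by (intro mult_left_mono assms) auto
  thus ?thesis by (simp add: ennreal_mult'[symmetric])
qed

lemma morrey_intro:
  assumes meas: "f \<in> borel_measurable lebesgue"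
    and fin: "\<And>x r. 0 < r \<Longrightarrow> (\<integral>\<^sup>+ y. ennreal (\<bar>f y\<bar> powr p) * indicator (ball (x::'a::euclidean_space) r) y \<partial>lebesgue) < \<infinity>"
    and bd: "\<And>x r. 0 < r \<Longrightarrow> morrey_M p lam f x r \<le> ennreal K"
  shows "f \<in> morrey p lam"
proof -
  have "f \<in> Lp_loc p"
    unfolding Lp_loc_def
  proof (intro CollectI conjI allI meas)
    fix x :: 'a and r :: real
    show "(\<integral>\<^sup>+ y. ennreal (\<bar>f y\<bar> powr p) * indicator (ball x r) y \<partial>lebesgue) < \<infinity>"
    proof (cases "0 < r")
      case True thus ?thesis by (rule fin)
    next
      case False
      hence "(\<lambda>y. ennreal (\<bar>f y\<bar> powr p) * indicator (ball x r) y) = (\<lambda>y. 0)"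
        using False zero_le_dist[of x] by (intro ext) (smt (verit) indicator_simps(2) mem_ball mult_zero_right)
      thus ?thesis by simp
    qed
  qed
  moreover have "(SUP x. SUP r\<in>{0<..}. morrey_M p lam f x r) \<le> ennreal K"
    by (intro SUP_least) (auto intro: bd)
  hence "(SUP x. SUP r\<in>{0<..}. morrey_M p lam f x r) < \<infinity>"
    using le_less_trans by fastforce
  ultimately show ?thesis unfolding morrey_def by blast
qed

lemma bdd_upper:
  assumes "\<And>y. \<bar>f y\<bar> powr p \<le> 1" "0 < r"
  shows "morrey_M p lam f (x::'a::euclidean_space) r \<le> ennreal (vB TYPE('a) * r powr (real DIM('a) - lam))"
proof -
  have "(\<integral>\<^sup>+ y. ennreal (\<bar>f y\<bar> powr p) * indicator (ball x r) y \<partial>lebesgue) \<le> ennreal (r ^ DIM('a) * vB TYPE('a))"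
    using int_bdd_ball[of r "\<lambda>y. \<bar>f y\<bar> powr p" x] assms by (simp add: vB_def)
  hence "morrey_M p lam f x r \<le> ennreal (r powr (-lam) * (r ^ DIM('a) * vB TYPE('a)))"
    by (rule M_upper)
  also have "r powr (-lam) * (r ^ DIM('a) * vB TYPE('a)) = vB TYPE('a) * r powr (real DIM('a) - lam)"
    using assms(2) by (simp add: powr_realpow[symmetric] powr_diff powr_minus divide_simps)
  finally show ?thesis .
qed

lemma bdd_V0:
  assumes "\<And>y. \<bar>f y\<bar> powr p \<le> 1" "lam < real DIM('a::euclidean_space)"
  shows "((\<lambda>r. SUP x::'a. morrey_M p lam f x r) \<longlongrightarrow> 0) (at_right 0)"
proof (rule tendsto_sandwich[of "\<lambda>_. 0" _ _ "\<lambda>r. ennreal (vB TYPE('a) * r powr (real DIM('a) - lam))"])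
  show "\<forall>\<^sub>F r in at_right 0. 0 \<le> (SUP x::'a. morrey_M p lam f x r)" by simp
  show "\<forall>\<^sub>F r in at_right 0. (SUP x::'a. morrey_M p lam f x r) \<le> ennreal (vB TYPE('a) * r powr (real DIM('a) - lam))"
    using eventually_at_right_less[of 0]
    by eventually_elim (auto intro!: SUP_least bdd_upper assms)
  show "((\<lambda>_. 0::ennreal) \<longlongrightarrow> 0) (at_right 0)" by simp
  have "((\<lambda>r. vB TYPE('a) * r powr (real DIM('a) - lam)) \<longlongrightarrow> 0) (at_right 0)"
    using assms(2) by real_asymp
  thus "((\<lambda>r. ennreal (vB TYPE('a) * r powr (real DIM('a) - lam))) \<longlongrightarrow> 0) (at_right 0)"
    using tendsto_ennrealI by fastforce
qed

lemma lower3: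
  fixes e :: "'a::euclidean_space" and r a :: real
  assumes e: "norm e = 1" and r: "0 < r" and a: "a = real DIM('a) - lam" and a0: "0 < a"
    and h: "\<And>y. r < norm y \<Longrightarrow> norm y < 3 * r \<Longrightarrow> norm y powr (-a) \<le> \<bar>f y\<bar> powr p"
  shows "ennreal (3 powr (-a) * vB TYPE('a)) \<le> morrey_M p lam f ((2 * r) *\<^sub>R e) r"
proof -
  let ?x = "(2 * r) *\<^sub>R e"
  have nx: "norm ?x = 2 * r" using e r by simp
  have "(\<integral>\<^sup>+ y. ennreal ((3 * r) powr (-a)) * indicator (ball ?x r) y \<partial>lebesgue)
      \<le> (\<integral>\<^sup>+ y. ennreal (\<bar>f y\<bar> powr p) * indicator (ball ?x r) y \<partial>lebesgue)"
  proof (intro nn_integral_mono)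
    fix y :: 'a
    show "ennreal ((3 * r) powr (-a)) * indicator (ball ?x r) y \<le> ennreal (\<bar>f y\<bar> powr p) * indicator (ball ?x r) y"
    proof (cases "y \<in> ball ?x r")
      case False thus ?thesis by simp
    next
      case True
      hence d: "norm (?x - y) < r" by (simp add: dist_norm)
      have n1: "r < norm y" using d nx norm_triangle_ineq2[of ?x y] by linarith
      have n2: "norm y < 3 * r" using d nx norm_triangle_ineq3[of y ?x] norm_minus_commute[of y ?x] by linarith
      have "(3 * r) powr (-a) \<le> norm y powr (-a)"
        using n1 n2 r a0 by (intro powr_mono2') auto
      also have "\<dots> \<le> \<bar>f y\<bar> powr p" by (rule h[OF n1 n2])
      finally show ?thesis using True by (simp add: ennreal_leI)
    qed
  qed
  hence "ennreal ((3 * r) powr (-a) * (r ^ DIM('a) * vB TYPE('a)))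
      \<le> (\<integral>\<^sup>+ y. ennreal (\<bar>f y\<bar> powr p) * indicator (ball ?x r) y \<partial>lebesgue)"
    using int_const_ball'[of r "(3 * r) powr (-a)" ?x] r by simp
  hence "ennreal (r powr (-lam) * ((3 * r) powr (-a) * (r ^ DIM('a) * vB TYPE('a)))) \<le> morrey_M p lam f ?x r"
    by (rule M_lower)
  moreover have "r powr (-lam) * ((3 * r) powr (-a) * (r ^ DIM('a) * vB TYPE('a))) = 3 powr (-a) * vB TYPE('a)"
  proof -
    have "r powr (-lam) * ((3 * r) powr (-a) * (r ^ DIM('a) * vB TYPE('a)))
        = 3 powr (-a) * vB TYPE('a) * (r powr (-lam) * r powr (-a) * r powr real DIM('a))"
      using r by (simp add: powr_mult powr_realpow)
    also have "r powr (-lam) * r powr (-a) * r powr real DIM('a) = r powr (-lam + -a + real DIM('a))"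
      using powr_add[of r "-lam" "-a"] powr_add[of r "-lam + -a" "real DIM('a)"] by simp
    also have "-lam + -a + real DIM('a) = 0" using a by simp
    finally show ?thesis using r by simp
  qed
  ultimately show ?thesis by simp
qed

lemma not_tendsto0:
  fixes g :: "real \<Rightarrow> ennreal"
  assumes "F \<noteq> bot" "\<forall>\<^sub>F r in F. ennreal c \<le> g r" "0 < c"
  shows "\<not> (g \<longlongrightarrow> 0) F"
proof
  assume "(g \<longlongrightarrow> 0) F"
  from tendsto_lowerbound[OF this assms(2,1)] have "ennreal c \<le> 0" .
  thus False using assms(3) by simp
qed

lemma count_bound:
  fixes e x :: "'a::euclidean_space" and r :: real
  assumes e: "norm e = 1" and r: "0 < r"
  shows "(\<integral>\<^sup>+ y. ennreal (indicator (\<Union>k. ball ((2::real)^k *\<^sub>R e) 1) y) * indicator (ball x r) y \<partial>lebesgue)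
     \<le> ennreal ((log 2 (4*r+4) + 2) * vB TYPE('a))"
proof -
  define c where "c k = (2::real)^k *\<^sub>R e" for k
  have dc: "dist (c k) (c j) = \<bar>2^k - 2^j\<bar>" for k j
    unfolding c_def dist_norm using e by (simp add: scaleR_diff_left[symmetric])
  define K where "K = {k. dist x (c k) < r + 1}"
  define m where "m = nat \<lceil>log 2 (4*r+4)\<rceil>"
  have lg: "2 \<le> log 2 (4*r+4)" using r by (simp add: le_log_iff)
  have m1: "4*r+4 \<le> 2^m"
  proof -
    have "log 2 (4*r+4) \<le> real m" unfolding m_def by linarith
    hence "2 powr log 2 (4*r+4) \<le> 2 powr real m" by simp
    thus ?thesis using r by (simp add: powr_realpow)
  qed
  have m2: "real m \<le> log 2 (4*r+4) + 1" unfolding m_def using lg by linarith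
  have fin: "finite K \<and> card K \<le> m + 1"
  proof (cases "K = {}")
    case True thus ?thesis by simp
  next
    case False
    define k0 where "k0 = (LEAST k. k \<in> K)"
    have k0K: "k0 \<in> K" using False unfolding k0_def by (metis LeastI_ex all_not_in_conv)
    have sub: "K \<subseteq> insert k0 {..<m}"
    proof
      fix k assume kK: "k \<in> K"
      show "k \<in> insert k0 {..<m}"
      proof (cases "k = k0")
        case False
        have "k0 \<le> k" using kK unfolding k0_def by (rule Least_le)
        hence lt: "k0 < k" using False by simp
        have "dist (c k) (c k0) \<le> dist x (c k) + dist x (c k0)" by (rule dist_triangle3)
        hence "dist (c k) (c k0) < 2*r+2" using kK k0K unfolding K_def by simp
        hence d: "(2::real)^k - 2^k0 < 2*r+2" using dc[of k k0] by simp
        have "(2::real)^k0 \<le> 2^(k-1)" using lt by (intro power_increasing) auto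
        moreover have "(2::real)^k = 2 * 2^(k-1)" using lt by (cases k) auto
        ultimately have "(2::real)^k < 2^m" using d m1 by linarith
        hence "k < m" by (simp add: power_strict_increasing_iff)
        thus ?thesis by simp
      qed simp
    qed
    hence "finite K" by (rule finite_subset) simp
    moreover have "card K \<le> card (insert k0 {..<m})" using sub by (intro card_mono) auto
    moreover have "card (insert k0 {..<m}) \<le> m + 1" using card_insert_le_m1[of "m+1" "{..<m}" k0] by simp
    ultimately show ?thesis by simp
  qed
  have pw: "ennreal (indicator (\<Union>k. ball ((2::real)^k *\<^sub>R e) 1) y) * indicator (ball x r) y
      \<le> (\<Sum>k\<in>K. indicator (ball (c k) 1) y)" for y
  proof (cases "y \<in> (\<Union>k. ball ((2::real)^k *\<^sub>R e) 1) \<and> y \<in> ball x r")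
    case False thus ?thesis by (auto simp: indicator_def)
  next
    case True
    then obtain k where k: "y \<in> ball (c k) 1" "y \<in> ball x r" unfolding c_def by auto
    have "dist x (c k) \<le> dist x y + dist y (c k)" by (rule dist_triangle)
    hence "k \<in> K" using k unfolding K_def by (simp add: dist_commute)
    hence "(indicator (ball (c k) 1) y :: ennreal) \<le> (\<Sum>k\<in>K. indicator (ball (c k) 1) y)"
      using fin by (intro member_le_sum) auto
    thus ?thesis using True k by simp
  qed
  have "(\<integral>\<^sup>+ y. ennreal (indicator (\<Union>k. ball ((2::real)^k *\<^sub>R e) 1) y) * indicator (ball x r) y \<partial>lebesgue)
      \<le> (\<integral>\<^sup>+ y. (\<Sum>k\<in>K. indicator (ball (c k) 1) y) \<partial>lebesgue)"
    by (intro nn_integral_mono pw)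
  also have "\<dots> = (\<Sum>k\<in>K. \<integral>\<^sup>+ y. indicator (ball (c k) 1) y \<partial>lebesgue)"
    by (intro nn_integral_sum) (auto intro: measurable_completion)
  also have "\<dots> = (\<Sum>k\<in>K. ennreal (vB TYPE('a)))"
  proof (intro sum.cong refl)
    fix k
    show "(\<integral>\<^sup>+ y. indicator (ball (c k) 1) y \<partial>lebesgue) = ennreal (vB TYPE('a))"
      using int_const_ball'[of 1 1 "c k"] by simp
  qed
  also have "\<dots> = ennreal (card K * vB TYPE('a))"
    using vB_pos[where 'a='a] by (simp add: ennreal_of_nat_eq_real_of_nat ennreal_mult')
  also have "\<dots> \<le> ennreal ((log 2 (4*r+4) + 2) * vB TYPE('a))"
  proof (intro ennreal_leI mult_right_mono)
    have "real (card K) \<le> real m + 1" using fin by linarith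
    thus "real (card K) \<le> log 2 (4*r+4) + 2" using m2 by linarith
  qed (use vB_pos[where 'a='a] in auto)
  finally show ?thesis .
qed

theorem corollary4p2:
  fixes lam p :: real
  assumes "0 < lam" "lam < real DIM('a::euclidean_space)" "1 \<le> p"
  shows "(V0inf_star_morrey p lam :: ('a \<Rightarrow> real) set) \<subset> V0_morrey p lam \<inter> Vinf_morrey p lam
       \<and> V0_morrey p lam \<inter> Vinf_morrey p lam \<subset> (V0_morrey p lam :: ('a \<Rightarrow> real) set)
       \<and> V0_morrey p lam \<subset> (morrey p lam :: ('a \<Rightarrow> real) set)"
proof -
  let ?n = "real DIM('a)"
  let ?v = "vB TYPE('a)"
  define a where "a = ?n - lam"
  have a0: "0 < a" and an: "a < ?n" using assms by (auto simp: a_def)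
  have p0: "0 < p" using assms by simp
  obtain e :: 'a where e: "e \<in> Basis" using nonempty_Basis by blast
  have ne: "norm e = 1" using e by simp
  have v0: "0 < ?v" by (rule vB_pos)

  define f3 :: "'a \<Rightarrow> real" where "f3 y = norm y powr (-a/p)" for y
  have h3: "\<bar>f3 y\<bar> powr p = norm y powr (-a)" for y
  proof (cases "y = 0")
    case True thus ?thesis by (simp add: f3_def)
  next
    case False thus ?thesis using p0 by (simp add: f3_def powr_powr)
  qed
  have m3: "f3 \<in> borel_measurable lebesgue"
    unfolding f3_def by (rule measurable_completion) measurable
  define C where "C = ?v * 2 powr a / (1 - 2 powr (a - ?n)) + ?v"
  have int3: "(\<integral>\<^sup>+ y. ennreal (\<bar>f3 y\<bar> powr p) * indicator (ball x r) y \<partial>lebesgue) \<le> ennreal (C * r powr lam)"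
    if "0 < r" for x r
    using intA[OF a0 an that, of x] by (simp add: h3 C_def a_def)
  have M3: "morrey_M p lam f3 x r \<le> ennreal C" if r: "0 < r" for x r
  proof -
    have "morrey_M p lam f3 x r \<le> ennreal (r powr (-lam) * (C * r powr lam))"
      by (rule M_upper[OF int3[OF r]])
    also have "r powr (-lam) * (C * r powr lam) = C"
      using r by (simp add: powr_minus field_simps)
    finally show ?thesis .
  qed
  have f3M: "f3 \<in> morrey p lam"
    by (rule morrey_intro[OF m3 _ M3]) (rule le_less_trans[OF int3], simp_all)
  have lowb: "\<forall>\<^sub>F r in F. ennreal (3 powr (-a) * ?v) \<le> (SUP x. morrey_M p lam f x r)"
    if ev: "\<forall>\<^sub>F r in F. 0 < r \<and> (\<forall>y. r < norm y \<longrightarrow> norm y < 3 * r \<longrightarrow> norm y powr (-a) \<le> \<bar>f y\<bar> powr p)"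
    for F and f :: "'a \<Rightarrow> real"
    using ev
  proof eventually_elim
    case (elim r)
    have "ennreal (3 powr (-a) * ?v) \<le> morrey_M p lam f ((2 * r) *\<^sub>R e) r"
      using elim by (intro lower3[OF ne _ a_def a0]) auto
    also have "\<dots> \<le> (SUP x. morrey_M p lam f x r)" by (rule SUP_upper) simp
    finally show ?case .
  qed
  have pos3: "0 < 3 powr (-a) * ?v" using v0 by simp
  have f3V0: "f3 \<notin> V0_morrey p lam"
  proof
    assume "f3 \<in> V0_morrey p lam"
    hence "((\<lambda>r. SUP x. morrey_M p lam f3 x r) \<longlongrightarrow> 0) (at_right 0)" by (simp add: V0_morrey_def)
    moreover have "\<forall>\<^sub>F r in at_right 0. ennreal (3 powr (-a) * ?v) \<le> (SUP x. morrey_M p lam f3 x r)"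
      by (rule lowb) (use eventually_at_right_less[of "0::real"] in \<open>eventually_elim, simp add: h3\<close>)
    ultimately show False using not_tendsto0[OF _ _ pos3] by auto
  qed

  define f2 :: "'a \<Rightarrow> real" where "f2 y = (if 1 \<le> norm y then f3 y else 0)" for y
  have h2: "\<bar>f2 y\<bar> powr p = (if 1 \<le> norm y then norm y powr (-a) else 0)" for y
    by (simp add: f2_def h3)
  have h2le1: "\<bar>f2 y\<bar> powr p \<le> 1" for y
  proof (cases "1 \<le> norm y")
    case True
    hence "norm y powr (-a) \<le> 1 powr (-a)" using a0 by (intro powr_mono2') auto
    thus ?thesis using True h2[of y] by simp
  qed (simp add: h2)
  have m2: "f2 \<in> borel_measurable lebesgue"
    unfolding f2_def f3_def by (rule measurable_completion) measurable
  have int2: "(\<integral>\<^sup>+ y. ennreal (\<bar>f2 y\<bar> powr p) * indicator (ball x r) y \<partial>lebesgue) \<le> ennreal (C * r powr lam)"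
    if "0 < r" for x r
  proof -
    have "(\<integral>\<^sup>+ y. ennreal (\<bar>f2 y\<bar> powr p) * indicator (ball x r) y \<partial>lebesgue)
        \<le> (\<integral>\<^sup>+ y. ennreal (\<bar>f3 y\<bar> powr p) * indicator (ball x r) y \<partial>lebesgue)"
      by (intro nn_integral_mono mult_right_mono ennreal_leI) (auto simp: h2 h3)
    thus ?thesis using int3[OF that, of x] by simp
  qed
  have M2: "morrey_M p lam f2 x r \<le> ennreal C" if r: "0 < r" for x r
  proof -
    have "morrey_M p lam f2 x r \<le> ennreal (r powr (-lam) * (C * r powr lam))"
      by (rule M_upper[OF int2[OF r]])
    also have "r powr (-lam) * (C * r powr lam) = C"
      using r by (simp add: powr_minus field_simps)
    finally show ?thesis .
  qed
  have f2M: "f2 \<in> morrey p lam"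
    by (rule morrey_intro[OF m2 _ M2]) (rule le_less_trans[OF int2], simp_all)
  have f2V0: "f2 \<in> V0_morrey p lam"
    using f2M bdd_V0[OF h2le1 assms(2)] by (simp add: V0_morrey_def)
  have f2Vinf: "f2 \<notin> Vinf_morrey p lam"
  proof
    assume "f2 \<in> Vinf_morrey p lam"
    hence "((\<lambda>r. SUP x. morrey_M p lam f2 x r) \<longlongrightarrow> 0) at_top" by (simp add: Vinf_morrey_def)
    moreover have "\<forall>\<^sub>F r in at_top. ennreal (3 powr (-a) * ?v) \<le> (SUP x. morrey_M p lam f2 x r)"
      by (rule lowb) (use eventually_ge_at_top[of "1::real"] in \<open>eventually_elim, auto simp: h2\<close>)
    ultimately show False using not_tendsto0[OF _ _ pos3] by auto
  qed

  define E where "E = (\<Union>k. ball ((2::real)^k *\<^sub>R e) 1)"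
  define f1 :: "'a \<Rightarrow> real" where "f1 y = indicator E y" for y
  have h1: "\<bar>f1 y\<bar> powr p = indicator E y" for y
    by (simp add: f1_def indicator_def)
  have h1le1: "\<bar>f1 y\<bar> powr p \<le> 1" for y by (simp add: h1 indicator_def)
  have m1: "f1 \<in> borel_measurable lebesgue"
    unfolding f1_def E_def by (rule measurable_completion) measurable
  define \<phi> where "\<phi> r = r powr (-lam) * ((log 2 (4*r+4) + 2) * ?v)" for r
  have int1: "(\<integral>\<^sup>+ y. ennreal (\<bar>f1 y\<bar> powr p) * indicator (ball x r) y \<partial>lebesgue) \<le> ennreal ((log 2 (4*r+4) + 2) * ?v)"
    if "0 < r" for x r
    using count_bound[OF ne that, of x] by (simp add: h1 E_def)
  have M1\<phi>: "morrey_M p lam f1 x r \<le> ennreal (\<phi> r)" if "0 < r" for x r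
    unfolding \<phi>_def by (rule M_upper[OF int1[OF that]])
  have \<phi>lim: "(\<phi> \<longlongrightarrow> 0) at_top"
    unfolding \<phi>_def using assms(1) by real_asymp
  obtain R where R: "\<And>r. R \<le> r \<Longrightarrow> \<phi> r < 1"
    using order_tendstoD(2)[OF \<phi>lim, of 1] by (auto simp: eventually_at_top_linorder)
  define R' where "R' = max R 1"
  define K where "K = max 1 (?v * R' powr (?n - lam))"
  have M1: "morrey_M p lam f1 x r \<le> ennreal K" if r: "0 < r" for x r
  proof (cases "R' \<le> r")
    case True
    hence "\<phi> r < 1" using R by (simp add: R'_def)
    hence "ennreal (\<phi> r) \<le> ennreal K" by (intro ennreal_leI) (simp add: K_def)
    thus ?thesis using M1\<phi>[OF r, of x] by simp
  next
    case False
    have "morrey_M p lam f1 x r \<le> ennreal (?v * r powr (?n - lam))"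
      by (rule bdd_upper[OF h1le1 r])
    also have "?v * r powr (?n - lam) \<le> ?v * R' powr (?n - lam)"
      using False r v0 assms(2) by (intro mult_left_mono powr_mono2) auto
    hence "ennreal (?v * r powr (?n - lam)) \<le> ennreal K"
      by (intro ennreal_leI) (simp add: K_def)
    finally show ?thesis .
  qed
  have f1M: "f1 \<in> morrey p lam"
    by (rule morrey_intro[OF m1 _ M1]) (rule le_less_trans[OF int1], simp_all)
  have f1V0: "f1 \<in> V0_morrey p lam"
    using f1M bdd_V0[OF h1le1 assms(2)] by (simp add: V0_morrey_def)
  have f1Vinf: "f1 \<in> Vinf_morrey p lam"
  proof -
    have "((\<lambda>r. SUP x. morrey_M p lam f1 x r) \<longlongrightarrow> 0) at_top"
    proof (rule tendsto_sandwich[of "\<lambda>_. 0" _ _ "\<lambda>r. ennreal (\<phi> r)"])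
      show "\<forall>\<^sub>F r in at_top. 0 \<le> (SUP x. morrey_M p lam f1 x r)" by simp
      show "\<forall>\<^sub>F r in at_top. (SUP x. morrey_M p lam f1 x r) \<le> ennreal (\<phi> r)"
        using eventually_gt_at_top[of "0::real"]
        by eventually_elim (auto intro!: SUP_least M1\<phi>)
      show "((\<lambda>_. 0::ennreal) \<longlongrightarrow> 0) at_top" by simp
      show "((\<lambda>r. ennreal (\<phi> r)) \<longlongrightarrow> 0) at_top"
        using tendsto_ennrealI[OF \<phi>lim] by simp
    qed
    thus ?thesis using f1M by (simp add: Vinf_morrey_def)
  qed
  have f1Vs: "f1 \<notin> Vstar_morrey p lam"
  proof
    assume "f1 \<in> Vstar_morrey p lam"
    hence lim: "((\<lambda>N::real. SUP x. (\<integral>\<^sup>+ y. ennreal (\<bar>f1 y\<bar> powr p) * indicator (ball x 1) y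
                              * indicator (UNIV - ball 0 N) y \<partial>lebesgue)) \<longlongrightarrow> 0) at_top"
      by (simp add: Vstar_morrey_def)
    have "ennreal ?v \<le> (SUP x. (\<integral>\<^sup>+ y. ennreal (\<bar>f1 y\<bar> powr p) * indicator (ball x 1) y
                              * indicator (UNIV - ball 0 N) y \<partial>lebesgue))" for N :: real
    proof -
      obtain k :: nat where k: "\<bar>N\<bar> + 1 < 2^k" using real_arch_pow[of 2 "\<bar>N\<bar> + 1"] by auto
      let ?x = "(2::real)^k *\<^sub>R e"
      have "(\<integral>\<^sup>+ y. ennreal 1 * indicator (ball ?x 1) y \<partial>lebesgue)
          \<le> (\<integral>\<^sup>+ y. ennreal (\<bar>f1 y\<bar> powr p) * indicator (ball ?x 1) y
                              * indicator (UNIV - ball 0 N) y \<partial>lebesgue)"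
      proof (intro nn_integral_mono)
        fix y :: 'a
        show "ennreal 1 * indicator (ball ?x 1) y \<le> ennreal (\<bar>f1 y\<bar> powr p) * indicator (ball ?x 1) y
                              * indicator (UNIV - ball 0 N) y"
        proof (cases "y \<in> ball ?x 1")
          case False thus ?thesis by simp
        next
          case True
          hence yE: "y \<in> E" unfolding E_def by blast
          have nx: "norm ?x = 2^k" using ne by simp
          have "norm (?x - y) < 1" using True by (simp add: dist_norm)
          hence "2^k - 1 < norm y" using nx norm_triangle_ineq2[of ?x y] by linarith
          hence "y \<notin> ball 0 N" using k by (simp add: dist_norm)
          thus ?thesis using True yE by (simp add: h1)
        qed
      qed
      moreover have "(\<integral>\<^sup>+ y. ennreal 1 * indicator (ball ?x 1) y \<partial>lebesgue) = ennreal ?v"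
        using int_const_ball'[of 1 1 ?x] by simp
      moreover have "(\<integral>\<^sup>+ y. ennreal (\<bar>f1 y\<bar> powr p) * indicator (ball ?x 1) y
                              * indicator (UNIV - ball 0 N) y \<partial>lebesgue)
          \<le> (SUP x. (\<integral>\<^sup>+ y. ennreal (\<bar>f1 y\<bar> powr p) * indicator (ball x 1) y
                              * indicator (UNIV - ball 0 N) y \<partial>lebesgue))"
        by (rule SUP_upper) simp
      ultimately show ?thesis by simp
    qed
    hence "\<forall>\<^sub>F N in at_top. ennreal ?v \<le> (SUP x. (\<integral>\<^sup>+ y. ennreal (\<bar>f1 y\<bar> powr p) * indicator (ball x 1) y
                              * indicator (UNIV - ball 0 N) y \<partial>lebesgue))" by simp
    with lim show False using not_tendsto0[OF _ _ v0] by auto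
  qed

  have s1: "(V0inf_star_morrey p lam :: ('a \<Rightarrow> real) set) \<subseteq> V0_morrey p lam \<inter> Vinf_morrey p lam"
    unfolding V0inf_star_morrey_def by blast
  have s2: "V0_morrey p lam \<subseteq> (morrey p lam :: ('a \<Rightarrow> real) set)"
    unfolding V0_morrey_def by blast
  have n1: "f1 \<notin> V0inf_star_morrey p lam" using f1Vs unfolding V0inf_star_morrey_def by blast
  show ?thesis
    using s1 s2 n1 f1V0 f1Vinf f2V0 f2Vinf f3M f3V0 by blast
qed

end
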